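(* Let $F(x)$ be a formula in prenex form with no free variables other than $x$. If the sentence $\forall xF(x)$ is safe, or the sentence $\exists xF(x)$ is safe, then the sentence $F(c)$ is safe for every object constant $c$.
   Context: Formulas are first-order formulas with object constants, predicate constants and equality, but no function constants of arity $>0$; primitive connectives $\bot,\land,\lor,\rightarrow$, quantifiers $\forall,\exists$; $\neg F$ is $F\rightarrow\bot$, $\top$ is $\bot\rightarrow\bot$. Restricted variables: for quantifier-free $G$, $\mathrm{RV}(G)$ is: $\emptyset$ if $G$ is an equality between two variables; the set of variables of $G$ if $G$ is any other atomic formula; $\mathrm{RV}(\bot)=\emptyset$; $\mathrm{RV}(G\land H)=\mathrm{RV}(G)\cup\mathrm{RV}(H)$; $\mathrm{RV}(G\lor H)=\mathrm{RV}(G)\cap\mathrm{RV}(H)$; $\mathrm{RV}(G\rightarrow H)=\emptyset$. An occurrence of a subformula or variable is positive if the number of implications containing it in their antecedent is even, negative otherwise, and strictly positive if it is in the antecedent of no implication. A prenex sentence $Q_1x_1\cdots Q_nx_nM$ ($M$ quantifier-free, $x_i$ distinct) is semi-safe if every strictly positive occurrence of every $x_i$ in $M$ belongs to a subformula $G\rightarrow H$ with $x_i\in\mathrm{RV}(G)$. Simplification transformations: $\neg\bot\mapsto\top$, $\neg\top\mapsto\bot$; $\bot\land G\mapsto\bot$, $G\land\bot\mapsto\bot$, $\top\land G\mapsto G$, $G\land\top\mapsto G$; $\bot\lor G\mapsto G$, $G\lor\bot\mapsto G$, $\top\lor G\mapsto\top$, $G\lor\top\mapsto\top$; $\bot\rightarrow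 G\mapsto\top$, $G\rightarrow\top\mapsto\top$, $\top\rightarrow G\mapsto G$. A variable $x$ is positively (resp. negatively) weakly restricted in a quantifier-free formula $G$ if the formula obtained from $G$ by first replacing every atomic formula $A$ of $G$ with $x\in\mathrm{RV}(A)$ by $\bot$ and then applying the simplification transformations is $\top$ (resp. $\bot$). A semi-safe prenex sentence $Q_1x_1\cdots Q_nx_nM$ is safe if for every occurrence of every variable $x_i$: (a) if $Q_i=\forall$, the occurrence belongs to a positive subformula (of the sentence) in which $x_i$ is positively weakly restricted, or to a negative subformula in which $x_i$ is negatively weakly restricted; (b) if $Q_i=\exists$, the occurrence belongs to a negative subformula in which $x_i$ is positively weakly restricted, or to a positive subformula in which $x_i$ is negatively weakly restricted. *)

theory Defs
  imports Main
begin

datatype ('c, 'v) trm = Var 'v | Cst 'c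

datatype ('p, 'c, 'v) fm =
    Bot
  | Pred 'p "('c, 'v) trm list"
  | Eq "('c, 'v) trm" "('c, 'v) trm"
  | And "('p, 'c, 'v) fm" "('p, 'c, 'v) fm"
  | Or "('p, 'c, 'v) fm" "('p, 'c, 'v) fm"
  | Imp "('p, 'c, 'v) fm" "('p, 'c, 'v) fm"
  | All 'v "('p, 'c, 'v) fm"
  | Ex 'v "('p, 'c, 'v) fm"

text \<open>Top is Bot \<rightarrow> Bot; negation of F is F \<rightarrow> Bot.\<close>
abbreviation Top :: "('p, 'c, 'v) fm" where "Top \<equiv> Imp Bot Bot"

fun tvars :: "('c, 'v) trm \<Rightarrow> 'v set" where
  "tvars (Var v) = {v}"
| "tvars (Cst c) = {}"

fun fv :: "('p, 'c, 'v) fm \<Rightarrow> 'v set" where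
  "fv Bot = {}"
| "fv (Pred p ts) = (\<Union>t\<in>set ts. tvars t)"
| "fv (Eq s t) = tvars s \<union> tvars t"
| "fv (And a b) = fv a \<union> fv b"
| "fv (Or a b) = fv a \<union> fv b"
| "fv (Imp a b) = fv a \<union> fv b"
| "fv (All x a) = fv a - {x}"
| "fv (Ex x a) = fv a - {x}"

fun qfree :: "('p, 'c, 'v) fm \<Rightarrow> bool" where
  "qfree Bot = True"
| "qfree (Pred p ts) = True"
| "qfree (Eq s t) = True"
| "qfree (And a b) = (qfree a \<and> qfree b)"
| "qfree (Or a b) = (qfree a \<and> qfree b)"
| "qfree (Imp a b) = (qfree a \<and> qfree b)"
| "qfree (All x a) = False"
| "qfree (Ex x a) = False"

fun is_atom :: "('p, 'c, 'v) fm \<Rightarrow> bool" where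
  "is_atom (Pred p ts) = True"
| "is_atom (Eq s t) = True"
| "is_atom _ = False"

fun tsubst :: "'v \<Rightarrow> 'c \<Rightarrow> ('c, 'v) trm \<Rightarrow> ('c, 'v) trm" where
  "tsubst x c (Var y) = (if y = x then Cst c else Var y)"
| "tsubst x c (Cst d) = Cst d"

fun subst :: "'v \<Rightarrow> 'c \<Rightarrow> ('p, 'c, 'v) fm \<Rightarrow> ('p, 'c, 'v) fm" where
  "subst x c Bot = Bot"
| "subst x c (Pred p ts) = Pred p (map (tsubst x c) ts)"
| "subst x c (Eq s t) = Eq (tsubst x c s) (tsubst x c t)"
| "subst x c (And a b) = And (subst x c a) (subst x c b)"
| "subst x c (Or a b) = Or (subst x c a) (subst x c b)"
| "subst x c (Imp a b) = Imp (subst x c a) (subst x c b)"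
| "subst x c (All y a) = (if y = x then All y a else All y (subst x c a))"
| "subst x c (Ex y a) = (if y = x then Ex y a else Ex y (subst x c a))"

datatype quant = QAll | QEx

fun quants :: "(quant \<times> 'v) list \<Rightarrow> ('p, 'c, 'v) fm \<Rightarrow> ('p, 'c, 'v) fm" where
  "quants [] M = M"
| "quants ((QAll, x) # qs) M = All x (quants qs M)"
| "quants ((QEx, x) # qs) M = Ex x (quants qs M)"

definition prenex :: "('p, 'c, 'v) fm \<Rightarrow> bool" where
  "prenex F \<longleftrightarrow> (\<exists>qs M. F = quants qs M \<and> qfree M)"

fun RV :: "('p, 'c, 'v) fm \<Rightarrow> 'v set" where
  "RV Bot = {}"
| "RV (Pred p ts) = (\<Union>t\<in>set ts. tvars t)"
| "RV (Eq s t) = (case (s, t) of (Var _, Var _) \<Rightarrow> {} | _ \<Rightarrow> tvars s \<union> tvars t)"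
| "RV (And a b) = RV a \<union> RV b"
| "RV (Or a b) = RV a \<inter> RV b"
| "RV (Imp a b) = {}"
| "RV (All x a) = {}"
| "RV (Ex x a) = {}"

text \<open>Positions are paths; 0 = left argument (antecedent for Imp), 1 = right argument.\<close>
fun subAt :: "('p, 'c, 'v) fm \<Rightarrow> nat list \<Rightarrow> ('p, 'c, 'v) fm option" where
  "subAt f [] = Some f"
| "subAt (And a b) (i # p) = (if i = 0 then subAt a p else if i = 1 then subAt b p else None)"
| "subAt (Or a b) (i # p) = (if i = 0 then subAt a p else if i = 1 then subAt b p else None)"
| "subAt (Imp a b) (i # p) = (if i = 0 then subAt a p else if i = 1 then subAt b p else None)"
| "subAt _ (i # p) = None"

fun nimp :: "('p, 'c, 'v) fm \<Rightarrow> nat list \<Rightarrow> nat" where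
  "nimp f [] = 0"
| "nimp (And a b) (i # p) = (if i = 0 then nimp a p else nimp b p)"
| "nimp (Or a b) (i # p) = (if i = 0 then nimp a p else nimp b p)"
| "nimp (Imp a b) (i # p) = (if i = 0 then Suc (nimp a p) else nimp b p)"
| "nimp _ (i # p) = 0"

text \<open>Positions of the atomic formulas of M in which the variable x occurs
  (each occurrence of x lies inside exactly such an atom).\<close>
definition occ :: "('p, 'c, 'v) fm \<Rightarrow> 'v \<Rightarrow> nat list \<Rightarrow> bool" where
  "occ M x p \<longleftrightarrow> (\<exists>A. subAt M p = Some A \<and> is_atom A \<and> x \<in> fv A)"

definition sAnd :: "('p, 'c, 'v) fm \<Rightarrow> ('p, 'c, 'v) fm \<Rightarrow> ('p, 'c, 'v) fm" where
  "sAnd a b = (if a = Bot \<or> b = Bot then Bot else if a = Top then b else if b = Top then a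
              else And a b)"

definition sOr :: "('p, 'c, 'v) fm \<Rightarrow> ('p, 'c, 'v) fm \<Rightarrow> ('p, 'c, 'v) fm" where
  "sOr a b = (if a = Top \<or> b = Top then Top else if a = Bot then b else if b = Bot then a
              else Or a b)"

definition sImp :: "('p, 'c, 'v) fm \<Rightarrow> ('p, 'c, 'v) fm \<Rightarrow> ('p, 'c, 'v) fm" where
  "sImp a b = (if a = Bot \<or> b = Top then Top else if a = Top then b else Imp a b)"

text \<open>Exhaustive application of the simplification transformations (bottom-up).\<close>
fun simpl :: "('p, 'c, 'v) fm \<Rightarrow> ('p, 'c, 'v) fm" where
  "simpl (And a b) = sAnd (simpl a) (simpl b)"
| "simpl (Or a b) = sOr (simpl a) (simpl b)"
| "simpl (Imp a b) = sImp (simpl a) (simpl b)"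
| "simpl f = f"

fun kill :: "'v \<Rightarrow> ('p, 'c, 'v) fm \<Rightarrow> ('p, 'c, 'v) fm" where
  "kill x (Pred p ts) = (if x \<in> RV (Pred p ts) then Bot else Pred p ts)"
| "kill x (Eq s t) = (if x \<in> RV (Eq s t :: ('p, 'c, 'v) fm) then Bot else Eq s t)"
| "kill x (And a b) = And (kill x a) (kill x b)"
| "kill x (Or a b) = Or (kill x a) (kill x b)"
| "kill x (Imp a b) = Imp (kill x a) (kill x b)"
| "kill x Bot = Bot"
| "kill x (All y a) = All y a"
| "kill x (Ex y a) = Ex y a"

definition pos_wr :: "'v \<Rightarrow> ('p, 'c, 'v) fm \<Rightarrow> bool" where
  "pos_wr x G \<longleftrightarrow> simpl (kill x G) = Top"

definition neg_wr :: "'v \<Rightarrow> ('p, 'c, 'v) fm \<Rightarrow> bool" where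
  "neg_wr x G \<longleftrightarrow> simpl (kill x G) = Bot"

definition prenex_sentence :: "(quant \<times> 'v) list \<Rightarrow> ('p, 'c, 'v) fm \<Rightarrow> bool" where
  "prenex_sentence qs M \<longleftrightarrow> qfree M \<and> distinct (map snd qs) \<and> fv (quants qs M) = {}"

definition semi_safe_cond :: "(quant \<times> 'v) list \<Rightarrow> ('p, 'c, 'v) fm \<Rightarrow> bool" where
  "semi_safe_cond qs M \<longleftrightarrow>
     (\<forall>x \<in> set (map snd qs). \<forall>p. occ M x p \<and> nimp M p = 0 \<longrightarrow>
        (\<exists>q r G H. p = q @ r \<and> subAt M q = Some (Imp G H) \<and> x \<in> RV G))"

definition safe_cond :: "(quant \<times> 'v) list \<Rightarrow> ('p, 'c, 'v) fm \<Rightarrow> bool" where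
  "safe_cond qs M \<longleftrightarrow>
     (\<forall>(Q, x) \<in> set qs. \<forall>p. occ M x p \<longrightarrow>
        (\<exists>q r G. p = q @ r \<and> subAt M q = Some G \<and>
           (if Q = QAll
            then (even (nimp M q) \<and> pos_wr x G) \<or> (odd (nimp M q) \<and> neg_wr x G)
            else (odd (nimp M q) \<and> pos_wr x G) \<or> (even (nimp M q) \<and> neg_wr x G))))"

definition semi_safe :: "('p, 'c, 'v) fm \<Rightarrow> bool" where
  "semi_safe F \<longleftrightarrow> (\<exists>qs M. F = quants qs M \<and> prenex_sentence qs M \<and> semi_safe_cond qs M)"

definition safe :: "('p, 'c, 'v) fm \<Rightarrow> bool" where
  "safe F \<longleftrightarrow> (\<exists>qs M. F = quants qs M \<and> prenex_sentence qs M \<and> semi_safe_cond qs M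
                        \<and> safe_cond qs M)"

end

theory Submission
  imports Defs
begin

lemma sAnd_Top: "sAnd a b = Top \<longleftrightarrow> a = Top \<and> b = Top" by (auto simp: sAnd_def)
lemma sAnd_Bot: "sAnd a b = Bot \<longleftrightarrow> a = Bot \<or> b = Bot" by (auto simp: sAnd_def)
lemma sOr_Top: "sOr a b = Top \<longleftrightarrow> a = Top \<or> b = Top" by (auto simp: sOr_def)
lemma sOr_Bot: "sOr a b = Bot \<longleftrightarrow> a = Bot \<and> b = Bot" by (auto simp: sOr_def)
lemma sImp_Top: "sImp a b = Top \<longleftrightarrow> a = Bot \<or> b = Top" by (auto simp: sImp_def)
lemma sImp_Bot: "sImp a b = Bot \<longleftrightarrow> a = Top \<and> b = Bot" by (auto simp: sImp_def)

lemma tvars_tsubst: "tvars (tsubst x c t) = tvars t - {x}"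
  by (cases t) auto

lemma RV_subst: "y \<noteq> x \<Longrightarrow> y \<in> RV G \<Longrightarrow> y \<in> RV (subst x c G)"
proof (induction G)
  case (Eq s t)
  then show ?case
    by (cases s; cases t) (auto simp: tvars_tsubst split: if_splits)
qed (auto simp: tvars_tsubst)

lemma wr_subst:
  assumes "y \<noteq> x"
  shows "(simpl (kill y G) = Top \<longrightarrow> simpl (kill y (subst x c G)) = Top) \<and>
         (simpl (kill y G) = Bot \<longrightarrow> simpl (kill y (subst x c G)) = Bot)"
proof (induction G)
  case (Pred p ts)
  then show ?case using RV_subst[OF assms, of "Pred p ts" c]
    by (auto simp del: RV.simps)
next
  case (Eq s t)
  then show ?case using RV_subst[OF assms, of "Eq s t" c]
    by (auto simp del: RV.simps)
qed (auto simp: sAnd_Top sAnd_Bot sOr_Top sOr_Bot sImp_Top sImp_Bot)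

lemma subAt_subst: "subAt (subst x c M) p = map_option (subst x c) (subAt M p)"
proof (induction M arbitrary: p)
qed (case_tac p; auto)+

lemma nimp_subst: "nimp (subst x c M) p = nimp M p"
proof (induction M arbitrary: p)
qed (case_tac p; auto)+

lemma fv_subst: "fv (subst x c F) = fv F - {x}"
  by (induction F) (auto simp: tvars_tsubst)

lemma qfree_subst: "qfree (subst x c F) = qfree F"
  by (induction F) auto

lemma is_atom_subst: "is_atom (subst x c F) = is_atom F"
  by (cases F) auto

lemma quants_subst: "x \<notin> set (map snd qs) \<Longrightarrow> subst x c (quants qs M) = quants qs (subst x c M)"
proof (induction qs)
  case (Cons a qs)
  then show ?case by (cases a; cases "fst a") auto
qed simp

lemma occ_subst: "y \<noteq> x \<Longrightarrow> occ (subst x c M) y p \<Longrightarrow> occ M y p"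
  by (auto simp: occ_def subAt_subst is_atom_subst fv_subst)

lemma quants_head_All: "All x F = quants qs M \<Longrightarrow> qfree M \<Longrightarrow> \<exists>qs'. qs = (QAll, x) # qs' \<and> F = quants qs' M"
  apply (cases qs)
   apply auto[1]
  apply (rename_tac a l; case_tac a; case_tac "fst a"; auto)
  done

lemma quants_head_Ex: "Ex x F = quants qs M \<Longrightarrow> qfree M \<Longrightarrow> \<exists>qs'. qs = (QEx, x) # qs' \<and> F = quants qs' M"
  apply (cases qs)
   apply auto[1]
  apply (rename_tac a l; case_tac a; case_tac "fst a"; auto)
  done

lemma main:
  assumes "qs = (Q, x) # qs'" "prenex_sentence qs M" "semi_safe_cond qs M" "safe_cond qs M"
  shows "safe (subst x c (quants qs' M))"
proof -
  have xn: "x \<notin> set (map snd qs')" and d: "distinct (map snd qs')"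
    using assms(1,2) by (auto simp: prenex_sentence_def)
  have qf: "qfree M" using assms(2) by (auto simp: prenex_sentence_def)
  have eq: "subst x c (quants qs' M) = quants qs' (subst x c M)"
    using quants_subst[OF xn] .
  have fv0: "fv (quants qs M) = {}" using assms(2) by (simp add: prenex_sentence_def)
  have "fv (quants qs' (subst x c M)) = fv (subst x c (quants qs' M))" using eq by simp
  also have "\<dots> = fv (quants qs' M) - {x}" by (simp add: fv_subst)
  also have "\<dots> = {}" using fv0 assms(1) by (cases Q) auto
  finally have fvs: "fv (quants qs' (subst x c M)) = {}" .
  have ps: "prenex_sentence qs' (subst x c M)"
    using qf d fvs by (simp add: prenex_sentence_def qfree_subst)
  have ss: "semi_safe_cond qs' (subst x c M)"
    unfolding semi_safe_cond_def
  proof (intro ballI allI impI)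
    fix y p
    assume y: "y \<in> set (map snd qs')" and h: "occ (subst x c M) y p \<and> nimp (subst x c M) p = 0"
    have yx: "y \<noteq> x" using y xn by auto
    have "occ M y p \<and> nimp M p = 0" using h occ_subst[OF yx] nimp_subst by metis
    moreover have ym: "y \<in> set (map snd qs)" using y assms(1) by auto
    moreover have all: "\<forall>x \<in> set (map snd qs). \<forall>p. occ M x p \<and> nimp M p = 0 \<longrightarrow>
        (\<exists>q r G H. p = q @ r \<and> subAt M q = Some (Imp G H) \<and> x \<in> RV G)"
      using assms(3) unfolding semi_safe_cond_def .
    ultimately have "\<exists>q r G H. p = q @ r \<and> subAt M q = Some (Imp G H) \<and> y \<in> RV G"
      using bspec[OF all ym] by blast
    then obtain q r G H where "p = q @ r" "subAt M q = Some (Imp G H)" "y \<in> RV G"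
      by blast
    show "\<exists>q r G H. p = q @ r \<and> subAt (subst x c M) q = Some (Imp G H) \<and> y \<in> RV G"
    proof -
      have A: "subAt (subst x c M) q = Some (Imp (subst x c G) (subst x c H))"
        using \<open>subAt M q = Some (Imp G H)\<close> by (simp add: subAt_subst)
      have B: "y \<in> RV (subst x c G)" using RV_subst[OF yx \<open>y \<in> RV G\<close>] .
      show ?thesis using \<open>p = q @ r\<close> A B by blast
    qed
  qed
  have sc: "safe_cond qs' (subst x c M)"
    unfolding safe_cond_def
  proof (intro ballI allI impI, clarify)
    fix Q' y p
    assume y: "(Q', y) \<in> set qs'" and h: "occ (subst x c M) y p"
    have yx: "y \<noteq> x" using y xn by force
    have "occ M y p" using h occ_subst[OF yx] by metis
    moreover have "(Q', y) \<in> set qs" using y assms(1) by auto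
    ultimately obtain q r G where g: "p = q @ r" "subAt M q = Some G"
      "(if Q' = QAll
            then (even (nimp M q) \<and> pos_wr y G) \<or> (odd (nimp M q) \<and> neg_wr y G)
            else (odd (nimp M q) \<and> pos_wr y G) \<or> (even (nimp M q) \<and> neg_wr y G))"
    proof -
      from assms(4) \<open>(Q', y) \<in> set qs\<close> have "\<forall>p. occ M y p \<longrightarrow>
        (\<exists>q r G. p = q @ r \<and> subAt M q = Some G \<and>
           (if Q' = QAll
            then (even (nimp M q) \<and> pos_wr y G) \<or> (odd (nimp M q) \<and> neg_wr y G)
            else (odd (nimp M q) \<and> pos_wr y G) \<or> (even (nimp M q) \<and> neg_wr y G)))"
        unfolding safe_cond_def by blast
      with \<open>occ M y p\<close> that show ?thesis by blast
    qed
    have w: "pos_wr y G \<Longrightarrow> pos_wr y (subst x c G)" "neg_wr y G \<Longrightarrow> neg_wr y (subst x c G)"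
      using wr_subst[OF yx, of G c] by (auto simp: pos_wr_def neg_wr_def)
    show "\<exists>q r G. p = q @ r \<and> subAt (subst x c M) q = Some G \<and>
           (if Q' = QAll
            then (even (nimp (subst x c M) q) \<and> pos_wr y G) \<or> (odd (nimp (subst x c M) q) \<and> neg_wr y G)
            else (odd (nimp (subst x c M) q) \<and> pos_wr y G) \<or> (even (nimp (subst x c M) q) \<and> neg_wr y G))"
    proof (intro exI conjI)
      show "p = q @ r" by fact
      show "subAt (subst x c M) q = Some (subst x c G)" using g(2) by (simp add: subAt_subst)
      show "if Q' = QAll
            then (even (nimp (subst x c M) q) \<and> pos_wr y (subst x c G)) \<or> (odd (nimp (subst x c M) q) \<and> neg_wr y (subst x c G))
            else (odd (nimp (subst x c M) q) \<and> pos_wr y (subst x c G)) \<or> (even (nimp (subst x c M) q) \<and> neg_wr y (subst x c G))"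
        using g(3) w unfolding nimp_subst apply (cases "Q' = QAll") apply simp_all apply blast apply blast done
    qed
  qed
  show ?thesis unfolding safe_def eq using ps ss sc by blast
qed

theorem lemma5:
  fixes F :: "('p, 'c, 'v) fm" and x :: 'v
  assumes "prenex F"
    and "fv F \<subseteq> {x}"
    and "safe (All x F) \<or> safe (Ex x F)"
  shows "\<forall>c. safe (subst x c F)"
proof
  fix c
  from assms(3) show "safe (subst x c F)"
  proof
    assume "safe (All x F)"
    then obtain qs M where h: "All x F = quants qs M" "prenex_sentence qs M" "semi_safe_cond qs M" "safe_cond qs M"
      unfolding safe_def by blast
    then obtain qs' where "qs = (QAll, x) # qs'" "F = quants qs' M"
      using quants_head_All[OF h(1)] h(2) unfolding prenex_sentence_def by blast
    then show ?thesis using main[OF _ h(2-4)] by simp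
  next
    assume "safe (Ex x F)"
    then obtain qs M where h: "Ex x F = quants qs M" "prenex_sentence qs M" "semi_safe_cond qs M" "safe_cond qs M"
      unfolding safe_def by blast
    then obtain qs' where "qs = (QEx, x) # qs'" "F = quants qs' M"
      using quants_head_Ex[OF h(1)] h(2) unfolding prenex_sentence_def by blast
    then show ?thesis using main[OF _ h(2-4)] by simp
  qed
qed

end
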